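(* Let $P,Q\in\Gamma_n$ and $0<r\le R$ with $r\le p_i/q_i\le R$ for all $i$. Let $s,t\in\mathbb{R}$ with $0\le s\le4$. If $t\ge s$ and $t(4-s)\ge6s-s^2-4$, then $$\Big(\frac{r+1}{2r}\Big)^{s-t-1}\frac{(4-s)r+s}{r}\,\Omega_t(P\|Q)\le\zeta_s(Q\|P)\le\Big(\frac{R+1}{2R}\Big)^{s-t-1}\frac{(4-s)R+s}{R}\,\Omega_t(P\|Q).$$ If $t\le s$ and $t(4-s)\le6s-s^2-4$, then $$\Big(\frac{R+1}{2R}\Big)^{s-t-1}\frac{(4-s)R+s}{R}\,\Omega_t(P\|Q)\le\zeta_s(Q\|P)\le\Big(\frac{r+1}{2r}\Big)^{s-t-1}\frac{(4-s)r+s}{r}\,\Omega_t(P\|Q).$$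
   Context: $\Gamma_n=\{P=(p_1,\dots,p_n): p_i>0,\ \sum_i p_i=1\}$, $n\ge2$. For $P,Q\in\Gamma_n$ and $s\in\mathbb{R}$: $\Omega_s(P\|Q)=[s(s-1)]^{-1}\big[\sum_i p_i\big(\frac{p_i+q_i}{2p_i}\big)^s-1\big]$ for $s\ne0,1$; $\Omega_0(P\|Q)=\sum_i p_i\ln\frac{2p_i}{p_i+q_i}$; $\Omega_1(P\|Q)=\sum_i\frac{p_i+q_i}{2}\ln\frac{p_i+q_i}{2p_i}$. $\zeta_s(Q\|P)=(s-1)^{-1}\sum_i(q_i-p_i)\big(\frac{p_i+q_i}{2p_i}\big)^{s-1}$ for $s\ne1$; $\zeta_1(Q\|P)=\sum_i(q_i-p_i)\ln\frac{p_i+q_i}{2p_i}$. *)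

theory Defs
  imports Complex_Main
begin

definition Gamma :: "nat \<Rightarrow> (nat \<Rightarrow> real) set" where
  "Gamma n = {p. (\<forall>i<n. p i > 0) \<and> (\<Sum>i<n. p i) = 1}"

definition Omega :: "nat \<Rightarrow> real \<Rightarrow> (nat \<Rightarrow> real) \<Rightarrow> (nat \<Rightarrow> real) \<Rightarrow> real" where
  "Omega n s p q =
    (if s = 0 then (\<Sum>i<n. p i * ln (2 * p i / (p i + q i)))
     else if s = 1 then (\<Sum>i<n. (p i + q i) / 2 * ln ((p i + q i) / (2 * p i)))
     else (1 / (s * (s - 1))) * ((\<Sum>i<n. p i * ((p i + q i) / (2 * p i)) powr s) - 1))"

definition zeta :: "nat \<Rightarrow> real \<Rightarrow> (nat \<Rightarrow> real) \<Rightarrow> (nat \<Rightarrow> real) \<Rightarrow> real" where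
  "zeta n s q p =
    (if s = 1 then (\<Sum>i<n. (q i - p i) * ln ((p i + q i) / (2 * p i)))
     else (1 / (s - 1)) * (\<Sum>i<n. (q i - p i) * ((p i + q i) / (2 * p i)) powr (s - 1)))"

end

theory Submission
  imports Defs
begin

definition GG :: "real \<Rightarrow> real \<Rightarrow> real" where
 "GG t w = (if t = 0 then w - 1 - ln w else if t = 1 then w * ln w - (w - 1)
     else (w powr t - 1 - t * (w - 1)) / (t * (t - 1)))"
definition GG1 :: "real \<Rightarrow> real \<Rightarrow> real" where
 "GG1 t w = (if t = 1 then ln w else (w powr (t - 1) - 1) / (t - 1))"
definition FF :: "real \<Rightarrow> real \<Rightarrow> real" where
 "FF s w = (if s = 1 then 2 * (w - 1) * ln w else 2 * (w - 1) * (w powr (s - 1) - 1) / (s - 1))"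
definition FF1 :: "real \<Rightarrow> real \<Rightarrow> real" where
 "FF1 s w = (if s = 1 then 2 * ln w + 2 * (w - 1) / w
    else 2 * (s * w powr (s - 1) - (s - 1) * w powr (s - 2) - 1) / (s - 1))"

lemma GG_deriv: assumes "w > 0" shows "(GG t has_real_derivative GG1 t w) (at w)"
proof -
  consider (a) "t = 0" | (b) "t = 1" | (c) "t \<noteq> 0" "t \<noteq> 1" by blast
  then show ?thesis
  proof cases
    case a
    have "((\<lambda>w. w - 1 - ln w) has_real_derivative 1 - 1 / w) (at w)"
      using assms by (auto intro!: derivative_eq_intros)
    moreover have "GG1 t w = 1 - 1 / w" using a assms by (simp add: GG1_def powr_minus divide_simps)
    moreover have "GG t = (\<lambda>w. w - 1 - ln w)" using a by (simp add: GG_def fun_eq_iff)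
    ultimately show ?thesis by simp
  next
    case b
    have "((\<lambda>w. w * ln w - (w - 1)) has_real_derivative ln w) (at w)"
      using assms by (auto intro!: derivative_eq_intros)
    moreover have "GG t = (\<lambda>w. w * ln w - (w - 1))" using b by (simp add: GG_def fun_eq_iff)
    ultimately show ?thesis using b by (simp add: GG1_def)
  next
    case c note False = c
    have "((\<lambda>w. (w powr t - 1 - t * (w - 1)) / (t * (t - 1))) has_real_derivative
       (t * w powr (t - 1) - t) / (t * (t - 1))) (at w)"
      using assms c False by (auto intro!: derivative_eq_intros has_real_derivative_powr)
    moreover have "(t * w powr (t - 1) - t) / (t * (t - 1)) = GG1 t w"
      using c by (simp add: GG1_def divide_simps) (simp add: algebra_simps)
    moreover have "GG t = (\<lambda>w. (w powr t - 1 - t * (w - 1)) / (t * (t - 1)))" using c by (simp add: GG_def fun_eq_iff)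
    ultimately show ?thesis by simp
  qed
qed

lemma GG1_deriv: assumes "w > 0" shows "(GG1 t has_real_derivative w powr (t - 2)) (at w)"
proof (cases "t = 1")
  case True
  have "(ln has_real_derivative 1 / w) (at w)" using assms by (auto intro!: derivative_eq_intros)
  moreover have "1 / w = w powr (t - 2)" using True assms by (simp add: powr_minus divide_simps)
  ultimately show ?thesis using True unfolding GG1_def[abs_def] by simp
next
  case False note c = False
  have "((\<lambda>w. (w powr (t - 1) - 1) / (t - 1)) has_real_derivative
       ((t - 1) * w powr (t - 1 - 1)) / (t - 1)) (at w)"
    using assms c False by (auto intro!: derivative_eq_intros has_real_derivative_powr)
  moreover have "((t - 1) * w powr (t - 1 - 1)) / (t - 1) = w powr (t - 2)" using False by simp
  moreover have "GG1 t = (\<lambda>w. (w powr (t - 1) - 1) / (t - 1))" using False by (simp add: GG1_def fun_eq_iff)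
  ultimately show ?thesis by simp
qed

lemma FF_deriv: assumes "w > 0" shows "(FF s has_real_derivative FF1 s w) (at w)"
proof (cases "s = 1")
  case True
  have "((\<lambda>w. 2 * (w - 1) * ln w) has_real_derivative 2 * 1 * ln w + 2 * (w - 1) * (1 / w)) (at w)"
    using assms by (auto intro!: derivative_eq_intros)
  moreover have "FF s = (\<lambda>w. 2 * (w - 1) * ln w)" using True by (simp add: FF_def fun_eq_iff)
  ultimately show ?thesis using True by (simp add: FF1_def)
next
  case False note c = False
  have "((\<lambda>w. 2 * (w powr s - w powr (s - 1) - w + 1) / (s - 1)) has_real_derivative
      2 * (s * w powr (s - 1) - (s - 1) * w powr (s - 1 - 1) - 1 + 0) / (s - 1)) (at w)"
    using assms c False by (auto intro!: derivative_eq_intros has_real_derivative_powr)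
  moreover have "2 * (s * w powr (s - 1) - (s - 1) * w powr (s - 1 - 1) - 1 + 0) / (s - 1) = FF1 s w"
    using False by (simp add: FF1_def)
  moreover have "((\<lambda>w. 2 * (w powr s - w powr (s - 1) - w + 1) / (s - 1)) has_real_derivative d) (at w)
     \<longleftrightarrow> (FF s has_real_derivative d) (at w)" for d
  proof (rule DERIV_cong_ev[OF refl _ refl])
    have "eventually (\<lambda>z. z > 0) (nhds w)" using assms eventually_nhds_in_open[of "{0<..}" w] by auto
    then show "eventually (\<lambda>z. 2 * (z powr s - z powr (s - 1) - z + 1) / (s - 1) = FF s z) (nhds w)"
    proof (rule eventually_mono)
      fix z :: real assume "z > 0"
      then show "2 * (z powr s - z powr (s - 1) - z + 1) / (s - 1) = FF s z"
        using False by (simp add: FF_def powr_diff algebra_simps divide_simps)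
    qed
  qed
  ultimately show ?thesis by simp
qed

lemma FF1_deriv: assumes "w > 0" shows "(FF1 s has_real_derivative 2 * w powr (s - 3) * (s * w - s + 2)) (at w)"
proof (cases "s = 1")
  case True
  have "((\<lambda>w. 2 * ln w + 2 * (w - 1) / w) has_real_derivative 2 * (1 / w) + (2 * 1 * w - 2 * (w - 1) * 1) / (w * w)) (at w)"
    using assms by (auto intro!: derivative_eq_intros)
  moreover have "FF1 s = (\<lambda>w. 2 * ln w + 2 * (w - 1) / w)" using True by (simp add: FF1_def fun_eq_iff)
  moreover have "2 * (1 / w) + (2 * 1 * w - 2 * (w - 1) * 1) / (w * w) = 2 * w powr (s - 3) * (s * w - s + 2)"
    using True assms by (simp add: powr_minus divide_simps powr_numeral) (simp add: algebra_simps power2_eq_square)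
  ultimately show ?thesis by simp
next
  case False note c = False
  have "((\<lambda>w. 2 * (s * w powr (s - 1) - (s - 1) * w powr (s - 2) - 1) / (s - 1)) has_real_derivative
      2 * (s * ((s - 1) * w powr (s - 1 - 1)) - (s - 1) * ((s - 2) * w powr (s - 2 - 1)) - 0) / (s - 1)) (at w)"
    using assms c False by (auto intro!: derivative_eq_intros has_real_derivative_powr)
  moreover have "FF1 s = (\<lambda>w. 2 * (s * w powr (s - 1) - (s - 1) * w powr (s - 2) - 1) / (s - 1))" using False by (simp add: FF1_def fun_eq_iff)
  moreover have "2 * (s * ((s - 1) * w powr (s - 1 - 1)) - (s - 1) * ((s - 2) * w powr (s - 2 - 1)) - 0) / (s - 1)
     = 2 * w powr (s - 3) * (s * w - s + 2)"
  proof -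
    have "w powr (s - 2) = w powr (s - 3) * w" using assms powr_add[of w "s - 3" 1] by simp
    then show ?thesis using False by (simp add: divide_simps) (simp add: algebra_simps)
  qed
  ultimately show ?thesis by simp
qed

lemma second_order_nonneg:
  fixes h hd hdd :: "real \<Rightarrow> real"
  assumes "a \<le> 1" "1 \<le> b" "a \<le> w" "w \<le> b"
   and d1: "\<And>x. a \<le> x \<Longrightarrow> x \<le> b \<Longrightarrow> (h has_real_derivative hd x) (at x)"
   and d2: "\<And>x. a \<le> x \<Longrightarrow> x \<le> b \<Longrightarrow> (hd has_real_derivative hdd x) (at x)"
   and p2: "\<And>x. a \<le> x \<Longrightarrow> x \<le> b \<Longrightarrow> hdd x \<ge> 0"
   and "h 1 = 0" "hd 1 = 0"
  shows "h w \<ge> 0"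
proof (cases "1 \<le> w")
  case True
  have hdpos: "hd x \<ge> 0" if "1 \<le> x" "x \<le> w" for x
  proof -
    have "hd 1 \<le> hd x"
    proof (rule DERIV_nonneg_imp_nondecreasing[OF \<open>1 \<le> x\<close>])
      fix y assume "1 \<le> y" "y \<le> x"
      then have "a \<le> y" "y \<le> b" using assms that by linarith+
      then show "\<exists>d. DERIV hd y :> d \<and> d \<ge> 0" using d2 p2 by blast
    qed
    then show ?thesis using assms by simp
  qed
  have "h 1 \<le> h w"
  proof (rule DERIV_nonneg_imp_nondecreasing[OF True])
    fix y assume "1 \<le> y" "y \<le> w"
    then have "a \<le> y" "y \<le> b" using assms by linarith+
    then show "\<exists>d. DERIV h y :> d \<and> d \<ge> 0" using d1 hdpos \<open>1 \<le> y\<close> \<open>y \<le> w\<close> by blast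
  qed
  then show ?thesis using assms by simp
next
  case False
  have hdneg: "hd x \<le> 0" if "w \<le> x" "x \<le> 1" for x
  proof -
    have "hd x \<le> hd 1"
    proof (rule DERIV_nonneg_imp_nondecreasing[OF \<open>x \<le> 1\<close>])
      fix y assume "x \<le> y" "y \<le> 1"
      then have "a \<le> y" "y \<le> b" using assms that by linarith+
      then show "\<exists>d. DERIV hd y :> d \<and> d \<ge> 0" using d2 p2 by blast
    qed
    then show ?thesis using assms by simp
  qed
  have "h w \<ge> h 1"
  proof (rule DERIV_nonpos_imp_nonincreasing[of w 1])
    show "w \<le> 1" using False by simp
    fix y assume "w \<le> y" "y \<le> 1"
    then have "a \<le> y" "y \<le> b" using assms by linarith+
    then show "\<exists>d. DERIV h y :> d \<and> d \<le> 0" using d1 hdneg \<open>w \<le> y\<close> \<open>y \<le> 1\<close> by blast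
  qed
  then show ?thesis using assms by simp
qed

definition kk :: "real \<Rightarrow> real \<Rightarrow> real \<Rightarrow> real" where
  "kk s t x = x powr (s - t - 1) * (2 * s * x + 4 - 2 * s)"

lemma FF2_eq: assumes "x > 0" shows "2 * x powr (s - 3) * (s * x - s + 2) = x powr (t - 2) * kk s t x"
proof -
  have "x powr (t - 2) * x powr (s - t - 1) = x powr (s - 3)" using assms by (simp add: powr_add[symmetric])
  then show ?thesis unfolding kk_def by (simp add: algebra_simps)
qed

lemma FF_GG_at1: "FF s 1 = 0" "FF1 s 1 = 0" "GG t 1 = 0" "GG1 t 1 = 0"
  by (auto simp: FF_def FF1_def GG_def GG1_def)

lemma compare_lower:
  assumes "0 < a" "a \<le> 1" "1 \<le> b" "a \<le> w" "w \<le> b"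
    and "\<And>x. a \<le> x \<Longrightarrow> x \<le> b \<Longrightarrow> c \<le> kk s t x"
  shows "c * GG t w \<le> FF s w"
proof -
  have "0 \<le> (\<lambda>w. FF s w - c * GG t w) w"
  proof (rule second_order_nonneg[where hd = "\<lambda>x. FF1 s x - c * GG1 t x"
        and hdd = "\<lambda>x. x powr (t - 2) * (kk s t x - c)", OF assms(2-5)])
    fix x assume x: "a \<le> x" "x \<le> b"
    then have "x > 0" using assms by simp
    show "((\<lambda>w. FF s w - c * GG t w) has_real_derivative FF1 s x - c * GG1 t x) (at x)"
      using \<open>x > 0\<close> by (auto intro!: derivative_eq_intros FF_deriv GG_deriv)
    have "((\<lambda>x. FF1 s x - c * GG1 t x) has_real_derivative 2 * x powr (s - 3) * (s * x - s + 2) - c * x powr (t - 2)) (at x)"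
      using \<open>x > 0\<close> by (auto intro!: derivative_eq_intros FF1_deriv GG1_deriv)
    then show "((\<lambda>x. FF1 s x - c * GG1 t x) has_real_derivative x powr (t - 2) * (kk s t x - c)) (at x)"
      using FF2_eq[OF \<open>x > 0\<close>, of s t] by (simp add: algebra_simps)
    show "0 \<le> x powr (t - 2) * (kk s t x - c)" using assms(6)[OF x] by simp
  qed (auto simp: FF_GG_at1)
  then show ?thesis by simp
qed

lemma compare_upper:
  assumes "0 < a" "a \<le> 1" "1 \<le> b" "a \<le> w" "w \<le> b"
    and "\<And>x. a \<le> x \<Longrightarrow> x \<le> b \<Longrightarrow> kk s t x \<le> c"
  shows "FF s w \<le> c * GG t w"
proof -
  have "0 \<le> (\<lambda>w. c * GG t w - FF s w) w"
  proof (rule second_order_nonneg[where hd = "\<lambda>x. c * GG1 t x - FF1 s x"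
        and hdd = "\<lambda>x. x powr (t - 2) * (c - kk s t x)", OF assms(2-5)])
    fix x assume x: "a \<le> x" "x \<le> b"
    then have "x > 0" using assms by simp
    show "((\<lambda>w. c * GG t w - FF s w) has_real_derivative c * GG1 t x - FF1 s x) (at x)"
      using \<open>x > 0\<close> by (auto intro!: derivative_eq_intros FF_deriv GG_deriv)
    have "((\<lambda>x. c * GG1 t x - FF1 s x) has_real_derivative c * x powr (t - 2) - 2 * x powr (s - 3) * (s * x - s + 2)) (at x)"
      using \<open>x > 0\<close> by (auto intro!: derivative_eq_intros FF1_deriv GG1_deriv)
    then show "((\<lambda>x. c * GG1 t x - FF1 s x) has_real_derivative x powr (t - 2) * (c - kk s t x)) (at x)"
      using FF2_eq[OF \<open>x > 0\<close>, of s t] by (simp add: algebra_simps)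
    show "0 \<le> x powr (t - 2) * (c - kk s t x)" using assms(6)[OF x] by simp
  qed (auto simp: FF_GG_at1)
  then show ?thesis by simp
qed

lemma kk_deriv: assumes "x > 0"
  shows "(kk s t has_real_derivative 2 * x powr (s - t - 2) * ((s - t) * s * x + (s - t - 1) * (2 - s))) (at x)"
proof -
  have "(kk s t has_real_derivative (s - t - 1) * x powr (s - t - 1 - 1) * (2 * s * x + 4 - 2 * s) + x powr (s - t - 1) * (2 * s)) (at x)"
    unfolding kk_def[abs_def] using assms by (auto intro!: derivative_eq_intros has_real_derivative_powr)
  moreover have "x powr (s - t - 1) = x powr (s - t - 2) * x" using assms powr_add[of x "s - t - 2" 1] by simp
  ultimately show ?thesis by (simp add: algebra_simps)
qed

lemma aux1: "(a::real) \<le> 0 \<Longrightarrow> 2 * b = -(c - d) \<Longrightarrow> e = a + b \<Longrightarrow> d \<le> c \<Longrightarrow> e \<le> 0" by linarith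
lemma aux2: "(a::real) \<ge> 0 \<Longrightarrow> 2 * b = -(c - d) \<Longrightarrow> e = a + b \<Longrightarrow> c \<le> d \<Longrightarrow> e \<ge> 0" by linarith

lemma kk_dec:
  assumes "s \<le> t" "t * (4 - s) \<ge> 6 * s - s^2 - 4" "0 \<le> s" "1/2 < x" "x \<le> y"
  shows "kk s t y \<le> kk s t x"
proof (rule DERIV_nonpos_imp_nonincreasing[OF assms(5)])
  fix z assume z: "x \<le> z" "z \<le> y"
  have "(s - t) * s * (z - 1/2) \<le> 0" 
    using assms z by (intro mult_nonpos_nonneg mult_nonpos_nonneg) auto
  moreover have "2 * ((s - t) * s * (1/2) + (s - t - 1) * (2 - s)) = -(t * (4 - s) - (6 * s - s^2 - 4))"
    by (simp add: algebra_simps power2_eq_square)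
  moreover have "(s - t) * s * z + (s - t - 1) * (2 - s) = (s - t) * s * (z - 1/2) + ((s - t) * s * (1/2) + (s - t - 1) * (2 - s))"
    by (simp add: algebra_simps)
  ultimately have "(s - t) * s * z + (s - t - 1) * (2 - s) \<le> 0" using assms(2)
    by (rule aux1)
  note L = this
  have "z > 0" using z assms by simp
  have "2 * z powr (s - t - 2) * ((s - t) * s * z + (s - t - 1) * (2 - s)) \<le> 0"
    using L by (intro mult_nonneg_nonpos) auto
  note D = this
  show "\<exists>y. (kk s t has_real_derivative y) (at z) \<and> y \<le> 0"
    by (rule exI, rule conjI[OF kk_deriv[OF \<open>z > 0\<close>, of s t] D])
qed

lemma kk_inc:
  assumes "t \<le> s" "t * (4 - s) \<le> 6 * s - s^2 - 4" "0 \<le> s" "1/2 < x" "x \<le> y"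
  shows "kk s t x \<le> kk s t y"
proof (rule DERIV_nonneg_imp_nondecreasing[OF assms(5)])
  fix z assume z: "x \<le> z" "z \<le> y"
  have "(s - t) * s * (z - 1/2) \<ge> 0" using assms z by (intro mult_nonneg_nonneg) auto
  moreover have "2 * ((s - t) * s * (1/2) + (s - t - 1) * (2 - s)) = -(t * (4 - s) - (6 * s - s^2 - 4))"
    by (simp add: algebra_simps power2_eq_square)
  moreover have "(s - t) * s * z + (s - t - 1) * (2 - s) = (s - t) * s * (z - 1/2) + ((s - t) * s * (1/2) + (s - t - 1) * (2 - s))"
    by (simp add: algebra_simps)
  ultimately have "(s - t) * s * z + (s - t - 1) * (2 - s) \<ge> 0" using assms(2)
    by (rule aux2)
  note L = this
  have "z > 0" using z assms by simp
  have "2 * z powr (s - t - 2) * ((s - t) * s * z + (s - t - 1) * (2 - s)) \<ge> 0"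
    using L by (intro mult_nonneg_nonneg) auto
  note D = this
  show "\<exists>y. (kk s t has_real_derivative y) (at z) \<and> y \<ge> 0"
    by (rule exI, rule conjI[OF kk_deriv[OF \<open>z > 0\<close>, of s t] D])
qed

theorem theorem4p1:
  fixes n :: nat and p q :: "nat \<Rightarrow> real" and r R s t :: real
  assumes "n \<ge> 2"
    and "p \<in> Gamma n" and "q \<in> Gamma n"
    and "0 < r" and "r \<le> R"
    and "\<forall>i<n. r \<le> p i / q i \<and> p i / q i \<le> R"
    and "0 \<le> s" and "s \<le> 4"
  shows "(t \<ge> s \<and> t * (4 - s) \<ge> 6 * s - s^2 - 4 \<longrightarrow>
            ((r + 1) / (2 * r)) powr (s - t - 1) * (((4 - s) * r + s) / r) * Omega n t p q
              \<le> zeta n s q p \<and>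
            zeta n s q p
              \<le> ((R + 1) / (2 * R)) powr (s - t - 1) * (((4 - s) * R + s) / R) * Omega n t p q)
       \<and> (t \<le> s \<and> t * (4 - s) \<le> 6 * s - s^2 - 4 \<longrightarrow>
            ((R + 1) / (2 * R)) powr (s - t - 1) * (((4 - s) * R + s) / R) * Omega n t p q
              \<le> zeta n s q p \<and>
            zeta n s q p
              \<le> ((r + 1) / (2 * r)) powr (s - t - 1) * (((4 - s) * r + s) / r) * Omega n t p q)"
proof -
  have pp: "\<And>i. i < n \<Longrightarrow> p i > 0" and sp: "(\<Sum>i<n. p i) = 1"
    using assms(2) by (auto simp: Gamma_def)
  have qp: "\<And>i. i < n \<Longrightarrow> q i > 0" and sq: "(\<Sum>i<n. q i) = 1"
    using assms(3) by (auto simp: Gamma_def)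
  have ne: "{..<n} \<noteq> {}" using assms(1) by (auto simp: lessThan_empty_iff)
  have bnd: "\<And>i. i < n \<Longrightarrow> r \<le> p i / q i \<and> p i / q i \<le> R" using assms(6) by blast
  have r1: "r \<le> 1"
  proof (rule ccontr)
    assume "\<not> r \<le> 1"
    have "q i < p i" if i: "i < n" for i
    proof -
      have "1 < p i / q i" using bnd[OF i] \<open>\<not> r \<le> 1\<close> by linarith
      then show ?thesis using qp[OF i] by (simp add: divide_simps)
    qed
    then have "(\<Sum>i<n. q i) < (\<Sum>i<n. p i)" using ne by (intro sum_strict_mono) auto
    then show False using sp sq by simp
  qed
  have R1: "1 \<le> R"
  proof (rule ccontr)
    assume "\<not> 1 \<le> R"
    have "p i < q i" if i: "i < n" for i
    proof -
      have "p i / q i < 1" using bnd[OF i] \<open>\<not> 1 \<le> R\<close> by linarith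
      then show ?thesis using qp[OF i] by (simp add: divide_simps)
    qed
    then have "(\<Sum>i<n. p i) < (\<Sum>i<n. q i)" using ne by (intro sum_strict_mono) auto
    then show False using sp sq by simp
  qed
  define w where "w i = (p i + q i) / (2 * p i)" for i
  define wr where "wr = (r + 1) / (2 * r)"
  define wR where "wR = (R + 1) / (2 * R)"
  have Rpos: "R > 0" using assms by simp
  have wr_eq: "wr = (1 + 1 / r) / 2" unfolding wr_def using assms(4) by (simp add: field_simps)
  have wR_eq: "wR = (1 + 1 / R) / 2" unfolding wR_def using Rpos by (simp add: field_simps)
  have w_eq: "w i = (1 + 1 / (p i / q i)) / 2" if "i < n" for i
    unfolding w_def using pp[OF that] qp[OF that] by (simp add: field_simps)
  have wrange: "wR \<le> w i \<and> w i \<le> wr" if "i < n" for i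
  proof -
    have pos: "p i / q i > 0" using pp[OF that] qp[OF that] by simp
    have "1 / R \<le> 1 / (p i / q i)" using bnd[OF that] by (intro divide_left_mono[OF _ _ mult_pos_pos[OF Rpos pos]]) auto
    moreover have "1 / (p i / q i) \<le> 1 / r" using bnd[OF that] by (intro divide_left_mono[OF _ _ mult_pos_pos[OF pos assms(4)]]) auto
    ultimately show ?thesis using w_eq[OF that] wr_eq wR_eq by simp
  qed
  have wR1: "wR \<le> 1" unfolding wR_def using R1 Rpos by (simp add: divide_simps)
  have wr1: "1 \<le> wr" unfolding wr_def using r1 assms(4) by (simp add: divide_simps)
  have wRh: "1/2 < wR" using Rpos wR_eq by simp
  have wRp: "0 < wR" using wRh by simp
  have pw: "p i * (w i - 1) = (q i - p i) / 2" if "i < n" for i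
    unfolding w_def using pp[OF that] by (simp add: field_simps)
  have spw: "(\<Sum>i<n. p i * (w i - 1)) = 0"
  proof -
    have "(\<Sum>i<n. p i * (w i - 1)) = (\<Sum>i<n. (q i - p i) / 2)" by (intro sum.cong refl) (simp add: pw)
    also have "\<dots> = ((\<Sum>i<n. q i) - (\<Sum>i<n. p i)) / 2" by (simp only: sum_divide_distrib[symmetric] sum_subtractf)
    finally show ?thesis using sp sq by simp
  qed
  have sqp: "(\<Sum>i<n. q i - p i) = 0" using sp sq by (simp add: sum_subtractf)
  have Om: "Omega n t p q = (\<Sum>i<n. p i * GG t (w i))"
  proof -
    consider (a) "t = 0" | (b) "t = 1" | (c) "t \<noteq> 0" "t \<noteq> 1" by blast
    then show ?thesis
    proof cases
      case a
      have "(\<Sum>i<n. p i * GG t (w i)) = (\<Sum>i<n. p i * (w i - 1) + p i * ln (2 * p i / (p i + q i)))"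
      proof (rule sum.cong[OF refl])
        fix i assume "i \<in> {..<n}"
        then have "p i > 0" "q i > 0" using pp qp by auto
        then have "ln (2 * p i / (p i + q i)) = - ln (w i)" unfolding w_def
          by (simp add: ln_div)
        then show "p i * GG t (w i) = p i * (w i - 1) + p i * ln (2 * p i / (p i + q i))"
          using a by (simp add: GG_def algebra_simps)
      qed
      also have "\<dots> = (\<Sum>i<n. p i * ln (2 * p i / (p i + q i)))" using spw by (simp add: sum.distrib)
      finally show ?thesis using a by (simp add: Omega_def)
    next
      case b
      have "(\<Sum>i<n. p i * GG t (w i)) = (\<Sum>i<n. (p i + q i) / 2 * ln ((p i + q i) / (2 * p i)) - p i * (w i - 1))"
      proof (rule sum.cong[OF refl])
        fix i assume "i \<in> {..<n}"
        then have "p i > 0" "q i > 0" using pp qp by auto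
        then have e: "p i * w i = (p i + q i) / 2" unfolding w_def by (simp add: field_simps)
        have l: "ln ((p i + q i) / (2 * p i)) = ln (w i)" by (simp add: w_def)
        have "p i * GG t (w i) = (p i * w i) * ln (w i) - p i * (w i - 1)"
          using b by (simp add: GG_def algebra_simps)
        then show "p i * GG t (w i) = (p i + q i) / 2 * ln ((p i + q i) / (2 * p i)) - p i * (w i - 1)"
          unfolding l e .
      qed
      also have "\<dots> = (\<Sum>i<n. (p i + q i) / 2 * ln ((p i + q i) / (2 * p i)))" using spw by (simp add: sum_subtractf)
      finally show ?thesis using b by (simp add: Omega_def)
    next
      case c
      have "(\<Sum>i<n. p i * GG t (w i)) = (\<Sum>i<n. (p i * w i powr t - p i - t * (p i * (w i - 1))) / (t * (t - 1)))"
        using c by (intro sum.cong refl) (simp add: GG_def, simp add: algebra_simps)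
      also have "\<dots> = ((\<Sum>i<n. p i * w i powr t) - (\<Sum>i<n. p i) - t * (\<Sum>i<n. p i * (w i - 1))) / (t * (t - 1))"
        by (simp add: sum_divide_distrib[symmetric] sum_subtractf sum_distrib_left)
      also have "\<dots> = 1 / (t * (t - 1)) * ((\<Sum>i<n. p i * ((p i + q i) / (2 * p i)) powr t) - 1)"
        using spw sp by (simp add: w_def)
      finally show ?thesis using c by (simp add: Omega_def)
    qed
  qed
  have Ze: "zeta n s q p = (\<Sum>i<n. p i * FF s (w i))"
  proof (cases "s = 1")
    case True
    have "(\<Sum>i<n. p i * FF s (w i)) = (\<Sum>i<n. (q i - p i) * ln ((p i + q i) / (2 * p i)))"
    proof (rule sum.cong[OF refl])
      fix i assume i: "i \<in> {..<n}"
      then have "p i * (w i - 1) = (q i - p i) / 2" using pw by simp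
      then have e: "2 * (p i * (w i - 1)) = q i - p i" by simp
      have l: "ln ((p i + q i) / (2 * p i)) = ln (w i)" by (simp add: w_def)
      have "p i * FF s (w i) = 2 * (p i * (w i - 1)) * ln (w i)"
        using True by (simp add: FF_def algebra_simps)
      then show "p i * FF s (w i) = (q i - p i) * ln ((p i + q i) / (2 * p i))"
        unfolding l e .
    qed
    then show ?thesis using True by (simp add: zeta_def)
  next
    case False
    have "(\<Sum>i<n. p i * FF s (w i)) = (\<Sum>i<n. ((q i - p i) * w i powr (s - 1) - (q i - p i)) / (s - 1))"
    proof (rule sum.cong[OF refl])
      fix i assume i: "i \<in> {..<n}"
      then have iN: "i < n" by simp
      then have e: "2 * (p i * (w i - 1)) = q i - p i" by (simp add: pw[OF iN])
      have "p i * FF s (w i) = 2 * (p i * (w i - 1)) * (w i powr (s - 1) - 1) / (s - 1)"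
        using False unfolding FF_def by (simp add: algebra_simps)
      also have "\<dots> = ((q i - p i) * w i powr (s - 1) - (q i - p i)) / (s - 1)"
        unfolding e by (simp add: algebra_simps)
      finally show "p i * FF s (w i) = ((q i - p i) * w i powr (s - 1) - (q i - p i)) / (s - 1)" .
    qed
    also have "\<dots> = ((\<Sum>i<n. (q i - p i) * w i powr (s - 1)) - (\<Sum>i<n. q i - p i)) / (s - 1)"
      by (simp add: sum_divide_distrib[symmetric] sum_subtractf)
    also have "\<dots> = 1 / (s - 1) * (\<Sum>i<n. (q i - p i) * ((p i + q i) / (2 * p i)) powr (s - 1))"
      using sqp by (simp add: w_def)
    finally show ?thesis using False by (simp add: zeta_def)
  qed
  have "2 * s * wr + 4 - 2 * s = ((4 - s) * r + s) / r"
    unfolding wr_def using assms(4) by (simp add: field_simps)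
  then have kr: "kk s t wr = ((r + 1) / (2 * r)) powr (s - t - 1) * (((4 - s) * r + s) / r)"
    unfolding kk_def by (simp only: wr_def)
  have "2 * s * wR + 4 - 2 * s = ((4 - s) * R + s) / R"
    unfolding wR_def using Rpos by (simp add: field_simps)
  then have kR: "kk s t wR = ((R + 1) / (2 * R)) powr (s - t - 1) * (((4 - s) * R + s) / R)"
    unfolding kk_def by (simp only: wR_def)
  have lowsum: "c * Omega n t p q \<le> zeta n s q p"
    if hc: "\<And>x. wR \<le> x \<Longrightarrow> x \<le> wr \<Longrightarrow> c \<le> kk s t x" for c
  proof -
    have "c * Omega n t p q = (\<Sum>i<n. p i * (c * GG t (w i)))"
      unfolding Om by (simp add: sum_distrib_left algebra_simps)
    also have "\<dots> \<le> (\<Sum>i<n. p i * FF s (w i))"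
    proof (rule sum_mono)
      fix i assume "i \<in> {..<n}"
      then have i: "i < n" by simp
      have "c * GG t (w i) \<le> FF s (w i)"
        by (rule compare_lower[OF wRp wR1 wr1]) (use wrange[OF i] hc in auto)
      then show "p i * (c * GG t (w i)) \<le> p i * FF s (w i)"
        using pp[OF i] by (simp add: mult_left_mono)
    qed
    finally show ?thesis using Ze by simp
  qed
  have upsum: "zeta n s q p \<le> c * Omega n t p q"
    if hc: "\<And>x. wR \<le> x \<Longrightarrow> x \<le> wr \<Longrightarrow> kk s t x \<le> c" for c
  proof -
    have "c * Omega n t p q = (\<Sum>i<n. p i * (c * GG t (w i)))"
      unfolding Om by (simp add: sum_distrib_left algebra_simps)
    moreover have "(\<Sum>i<n. p i * FF s (w i)) \<le> (\<Sum>i<n. p i * (c * GG t (w i)))"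
    proof (rule sum_mono)
      fix i assume "i \<in> {..<n}"
      then have i: "i < n" by simp
      have "FF s (w i) \<le> c * GG t (w i)"
        by (rule compare_upper[OF wRp wR1 wr1]) (use wrange[OF i] hc in auto)
      then show "p i * FF s (w i) \<le> p i * (c * GG t (w i))"
        using pp[OF i] by (simp add: mult_left_mono)
    qed
    ultimately show ?thesis using Ze by simp
  qed
  show ?thesis
  proof (intro conjI impI)
    assume h: "s \<le> t \<and> 6 * s - s^2 - 4 \<le> t * (4 - s)"
    have "\<And>x. wR \<le> x \<Longrightarrow> x \<le> wr \<Longrightarrow> kk s t wr \<le> kk s t x"
      using h assms(7) wRh by (intro kk_dec) auto
    from lowsum[OF this] show "((r + 1) / (2 * r)) powr (s - t - 1) * (((4 - s) * r + s) / r) * Omega n t p q \<le> zeta n s q p"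
      using kr by simp
    have "\<And>x. wR \<le> x \<Longrightarrow> x \<le> wr \<Longrightarrow> kk s t x \<le> kk s t wR"
      using h assms(7) wRh by (intro kk_dec) auto
    from upsum[OF this] show "zeta n s q p \<le> ((R + 1) / (2 * R)) powr (s - t - 1) * (((4 - s) * R + s) / R) * Omega n t p q"
      using kR by simp
  next
    assume h: "t \<le> s \<and> t * (4 - s) \<le> 6 * s - s^2 - 4"
    have "\<And>x. wR \<le> x \<Longrightarrow> x \<le> wr \<Longrightarrow> kk s t wR \<le> kk s t x"
      using h assms(7) wRh by (intro kk_inc) auto
    from lowsum[OF this] show "((R + 1) / (2 * R)) powr (s - t - 1) * (((4 - s) * R + s) / R) * Omega n t p q \<le> zeta n s q p"
      using kR by simp
    have "\<And>x. wR \<le> x \<Longrightarrow> x \<le> wr \<Longrightarrow> kk s t x \<le> kk s t wr"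
      using h assms(7) wRh by (intro kk_inc) auto
    from upsum[OF this] show "zeta n s q p \<le> ((r + 1) / (2 * r)) powr (s - t - 1) * (((4 - s) * r + s) / r) * Omega n t p q"
      using kr by simp
  qed
qed

end
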